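(* Let $f\in\mathrm{Homeo}_*(\mathbb{T}^2)$, let $F:\mathbb{R}^2\to\mathbb{R}^2$ be a lift of $f$, and let $D\subset\mathbb{R}^2$ be a closed topological disk. Then there exist no integer $N\ne0$ and $(p,q)\in\mathbb{Z}^2$ such that $F^N(D)\subseteq T_{p,q}(D)$ or $T_{p,q}(D)\subseteq F^N(D)$, where $T_{p,q}(x,y)=(x+p,y+q)$.
   Context: $\mathbb{T}^2=\mathbb{R}^2/\mathbb{Z}^2$. $\mathrm{Homeo}_*(\mathbb{T}^2)$ is the set of homeomorphisms of $\mathbb{T}^2$ isotopic to the identity whose rotation set (the set of limit points mod $\mathbb{Z}^2$ of $(F^{n_k}(\tilde z)-\tilde z)/n_k$, $n_k\to\infty$, $\tilde z\in\mathbb{R}^2$, for a lift $F$) is a single point $(\alpha,\beta)\bmod\mathbb{Z}^2$ with $1,\alpha,\beta$ rationally independent. *)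

theory Defs
  imports "HOL-Analysis.Analysis"
begin

definition transl :: "int \<Rightarrow> int \<Rightarrow> real^2 \<Rightarrow> real^2" where
  "transl p q z = z + vector [real_of_int p, real_of_int q]"

text \<open>F is a lift of a homeomorphism of the torus isotopic to the identity:
  a homeomorphism of the plane commuting with all integer translations.\<close>
definition torus_homeo_lift :: "(real^2 \<Rightarrow> real^2) \<Rightarrow> bool" where
  "torus_homeo_lift F \<longleftrightarrow> (\<exists>G. homeomorphism UNIV UNIV F G) \<and>
     (\<forall>p q z. F (transl p q z) = transl p q (F z))"

definition iter_int :: "(real^2 \<Rightarrow> real^2) \<Rightarrow> int \<Rightarrow> real^2 \<Rightarrow> real^2" where
  "iter_int F N = (if N \<ge> 0 then F ^^ nat N else (inv F) ^^ nat (- N))"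

definition rotation_set :: "(real^2 \<Rightarrow> real^2) \<Rightarrow> (real^2) set" where
  "rotation_set F = {v. \<exists>z n. strict_mono (n :: nat \<Rightarrow> nat) \<and>
      ((\<lambda>k. (1 / real (n k)) *\<^sub>R ((F ^^ n k) z - z)) \<longlonglongrightarrow> v)}"

definition rationally_independent3 :: "real \<Rightarrow> real \<Rightarrow> real \<Rightarrow> bool" where
  "rationally_independent3 a b c \<longleftrightarrow>
     (\<forall>x y z :: rat. of_rat x * a + of_rat y * b + of_rat z * c = 0 \<longrightarrow> x = 0 \<and> y = 0 \<and> z = 0)"

text \<open>F is a lift of some f in Homeo_*(T^2) (totally irrational pseudo-rotation).\<close>
definition homeo_star_lift :: "(real^2 \<Rightarrow> real^2) \<Rightarrow> bool" where
  "homeo_star_lift F \<longleftrightarrow> torus_homeo_lift F \<and>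
     (\<exists>\<alpha> \<beta>. rotation_set F = {vector [\<alpha>, \<beta>]} \<and> rationally_independent3 1 \<alpha> \<beta>)"

end

theory Submission
  imports Defs
begin

lemma D_fp:
  fixes D :: "(real^2) set"
  assumes "D homeomorphic cball (0 :: real^2) 1" "continuous_on D f" "f ` D \<subseteq> D"
  shows "\<exists>x\<in>D. f x = x"
proof -
  have "\<forall>g. continuous_on (cball (0::real^2) 1) g \<and> g \<in> cball 0 1 \<rightarrow> cball 0 1 \<longrightarrow> (\<exists>y\<in>cball 0 1. g y = y)"
    using brouwer_ball[of 1 0] by (metis zero_less_one)
  then have "\<forall>f. continuous_on D f \<and> f \<in> D \<rightarrow> D \<longrightarrow> (\<exists>x\<in>D. f x = x)"
    using homeomorphic_fixpoint_property[OF assms(1)] by blast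
  then show ?thesis using assms(2,3) by blast
qed

lemma vec2_add: "vector [a,b] + vector [c,d] = (vector [a+c, b+d] :: real^2)"
  by (simp add: vec_eq_iff forall_2 vector_2)

lemma vec2_scale: "r *\<^sub>R (vector [a,b] :: real^2) = vector [r*a, r*b]"
  by (simp add: vec_eq_iff forall_2 vector_2)

lemma transl_comp: "transl a b (transl c d z) = transl (a+c) (b+d) z"
  unfolding transl_def by (simp add: vec2_add algebra_simps)

lemma transl_neg: "transl (-a) (-b) (transl a b z) = z"
  by (simp add: transl_comp transl_def vec_eq_iff forall_2 vector_2)

lemma transl_neg2: "transl a b (transl (-a) (-b) z) = z"
  by (simp add: transl_comp transl_def vec_eq_iff forall_2 vector_2)

lemma funpow_comm:
  fixes H :: "real^2 \<Rightarrow> real^2"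
  assumes "\<And>p q z. H (transl p q z) = transl p q (H z)"
  shows "(H ^^ m) (transl p q z) = transl p q ((H ^^ m) z)"
  by (induction m) (auto simp: assms)

lemma funpow_cont:
  fixes H :: "real^2 \<Rightarrow> real^2"
  assumes "continuous_on UNIV H"
  shows "continuous_on UNIV (H ^^ m)"
proof (induction m)
  case 0 then show ?case by (simp add: continuous_on_id)
next
  case (Suc m)
  have "continuous_on UNIV (H \<circ> (H ^^ m))"
    by (rule continuous_on_compose[OF Suc]) (use assms continuous_on_subset in blast)
  then show ?case by simp
qed

lemma funpow_inv:
  fixes F G :: "real^2 \<Rightarrow> real^2"
  assumes "\<And>x. G (F x) = x"
  shows "(G ^^ m) ((F ^^ m) x) = x"
proof (induction m)
  case 0 then show ?case by (simp add: funpow_0)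
next
  case (Suc m)
  have a: "(G ^^ Suc m) y = (G ^^ m) (G y)" for y
    by (metis comp_apply funpow_Suc_right)
  have "(G ^^ Suc m) ((F ^^ Suc m) x) = (G ^^ m) (G (F ((F ^^ m) x)))"
    unfolding a by simp
  then show ?case using Suc assms by simp
qed

lemma rat_contra:
  assumes "rationally_independent3 1 \<alpha> \<beta>" "\<alpha> = real_of_int a / real m"
  shows False
proof -
  define x :: rat where "x = - (of_int a / of_nat m)"
  have "of_rat x = - (real_of_int a / real m)"
    unfolding x_def by (simp add: of_rat_divide of_rat_minus)
  then have "of_rat x * 1 + of_rat 1 * \<alpha> + of_rat 0 * \<beta> = 0" using assms(2) by simp
  then show False using assms(1) unfolding rationally_independent3_def by fastforce
qed

theorem lemma6:
  fixes F :: "real^2 \<Rightarrow> real^2" and D :: "(real^2) set"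
  assumes "homeo_star_lift F"
    and "D homeomorphic cball (0 :: real^2) 1"
  shows "\<not> (\<exists>N :: int. \<exists>p q :: int. N \<noteq> 0 \<and>
            (iter_int F N ` D \<subseteq> transl p q ` D \<or> transl p q ` D \<subseteq> iter_int F N ` D))"
proof
  assume "\<exists>N :: int. \<exists>p q :: int. N \<noteq> 0 \<and>
            (iter_int F N ` D \<subseteq> transl p q ` D \<or> transl p q ` D \<subseteq> iter_int F N ` D)"
  then obtain N p q where N: "N \<noteq> 0" and
    incl: "iter_int F N ` D \<subseteq> transl p q ` D \<or> transl p q ` D \<subseteq> iter_int F N ` D" by blast
  from assms(1) obtain G \<alpha> \<beta> where hom: "homeomorphism UNIV UNIV F G"
    and comF: "\<And>p q z. F (transl p q z) = transl p q (F z)"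
    and rot: "rotation_set F = {vector [\<alpha>, \<beta>]}" and ri: "rationally_independent3 1 \<alpha> \<beta>"
    unfolding homeo_star_lift_def torus_homeo_lift_def by blast
  have GF: "\<And>x. G (F x) = x" and FG: "\<And>x. F (G x) = x"
    using hom unfolding homeomorphism_def by auto
  have cF: "continuous_on UNIV F" and cG: "continuous_on UNIV G"
    using hom unfolding homeomorphism_def by auto
  have invF: "inv F = G"
    using GF FG by (metis inv_equality ext)
  have comG: "\<And>p q z. G (transl p q z) = transl p q (G z)"
    by (metis GF FG comF)
  define \<Phi> where "\<Phi> = iter_int F"
  have Phi: "\<Phi> M = (if M \<ge> 0 then F ^^ nat M else G ^^ nat (- M))" for M
    unfolding \<Phi>_def iter_int_def invF by simp
  have cPhi: "continuous_on UNIV (\<Phi> M)" for M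
    unfolding Phi using funpow_cont[OF cF] funpow_cont[OF cG] by simp
  have comPhi: "\<Phi> M (transl p q z) = transl p q (\<Phi> M z)" for M p q z
    unfolding Phi using funpow_comm[OF comF] funpow_comm[OF comG] by simp
  have invPhi: "\<Phi> (-M) (\<Phi> M x) = x" for M x
  proof (cases "M = 0")
    case True then show ?thesis by (simp add: Phi)
  next
    case False
    show ?thesis
    proof (cases "M > 0")
      case True then show ?thesis using funpow_inv[of G F, OF GF] by (simp add: Phi)
    next
      case False then show ?thesis using funpow_inv[of F G, OF FG] \<open>M \<noteq> 0\<close> by (simp add: Phi)
    qed
  qed
  have "\<exists>z a b. \<Phi> N z = transl a b z"
    using incl
  proof
    assume h: "iter_int F N ` D \<subseteq> transl p q ` D"
    have "(\<lambda>x. transl (-p) (-q) (\<Phi> N x)) ` D \<subseteq> D"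
    proof
      fix y assume "y \<in> (\<lambda>x. transl (-p) (-q) (\<Phi> N x)) ` D"
      then obtain x where x: "x \<in> D" "y = transl (-p) (-q) (\<Phi> N x)" by blast
      then obtain d where "d \<in> D" "\<Phi> N x = transl p q d" using h \<Phi>_def by blast
      then show "y \<in> D" using x transl_neg by simp
    qed
    moreover have "continuous_on D (\<lambda>x. transl (-p) (-q) (\<Phi> N x))"
      unfolding transl_def
      by (intro continuous_intros continuous_on_subset[OF cPhi]) auto
    ultimately obtain z where "transl (-p) (-q) (\<Phi> N z) = z"
      using D_fp[OF assms(2)] by blast
    then have "\<Phi> N z = transl p q z" using transl_neg2 by metis
    then show ?thesis by blast
  next
    assume h: "transl p q ` D \<subseteq> iter_int F N ` D"
    have "(\<lambda>x. \<Phi> (-N) (transl p q x)) ` D \<subseteq> D"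
    proof
      fix y assume "y \<in> (\<lambda>x. \<Phi> (-N) (transl p q x)) ` D"
      then obtain x where x: "x \<in> D" "y = \<Phi> (-N) (transl p q x)" by blast
      then obtain d where "d \<in> D" "transl p q x = \<Phi> N d" using h \<Phi>_def by blast
      then show "y \<in> D" using x invPhi by simp
    qed
    moreover have "continuous_on D (\<lambda>x. \<Phi> (-N) (transl p q x))"
      unfolding transl_def
      by (intro continuous_on_compose2[OF cPhi] continuous_intros) auto
    ultimately obtain z where "\<Phi> (-N) (transl p q z) = z"
      using D_fp[OF assms(2)] by blast
    then have "\<Phi> N z = transl p q z" using invPhi[of "-N" "transl p q z"] by simp
    then show ?thesis by blast
  qed
  then obtain z a b where zab: "\<Phi> N z = transl a b z" by blast
  have "\<exists>m a b. m > 0 \<and> (F ^^ m) z = transl a b z"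
  proof (cases "N > 0")
    case True then show ?thesis using zab by (intro exI[of _ "nat N"]) (auto simp: Phi)
  next
    case False
    then have "\<Phi> (-N) (\<Phi> N z) = transl a b (\<Phi> (-N) z)" using zab comPhi by simp
    then have "z = transl a b (\<Phi> (-N) z)" using invPhi by simp
    then have "\<Phi> (-N) z = transl (-a) (-b) z" using transl_neg by metis
    then show ?thesis using False N by (intro exI[of _ "nat (-N)"]) (auto simp: Phi)
  qed
  then obtain m a b where m: "m > 0" and Fm: "(F ^^ m) z = transl a b z" by blast
  define v :: "real^2" where "v = vector [real_of_int a, real_of_int b]"
  have iter: "(F ^^ (k * m)) z = z + real k *\<^sub>R v" for k
  proof (induction k)
    case 0 then show ?case by simp
  next
    case (Suc k)
    have "(F ^^ (Suc k * m)) z = (F ^^ m) ((F ^^ (k * m)) z)"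
      by (simp add: funpow_add)
    also have "\<dots> = (F ^^ m) (transl (int k * a) (int k * b) z)"
      using Suc by (simp add: transl_def v_def vec2_scale)
    also have "\<dots> = transl (int k * a) (int k * b) (transl a b z)"
      using funpow_comm[OF comF] Fm by simp
    also have "\<dots> = z + real (Suc k) *\<^sub>R v"
      by (simp add: transl_def v_def vec2_scale vec2_add algebra_simps)
    finally show ?case .
  qed
  define n where "n = (\<lambda>k::nat. (k + 1) * m)"
  have sm: "strict_mono n" unfolding n_def strict_mono_def using m by simp
  have eqf: "(\<lambda>k. (1 / real (n k)) *\<^sub>R ((F ^^ n k) z - z)) = (\<lambda>k. (1 / real m) *\<^sub>R v)"
  proof
    fix k
    have "(F ^^ n k) z - z = real (k+1) *\<^sub>R v" unfolding n_def using iter[of "k+1"] by simp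
    moreover have "1 / real ((k+1) * m) * real (k+1) = 1 / real m"
    proof -
      have p: "real (k+1) > 0" "real m > 0" using m by auto
      have "1 / real ((k+1) * m) * real (k+1) = real (k+1) / (real (k+1) * real m)"
        by (simp only: of_nat_mult) simp
      also have "\<dots> = 1 / real m" using p by simp
      finally show ?thesis .
    qed
    ultimately show "(1 / real (n k)) *\<^sub>R ((F ^^ n k) z - z) = (1 / real m) *\<^sub>R v"
      unfolding n_def by simp
  qed
  then have "(1 / real m) *\<^sub>R v \<in> rotation_set F"
    unfolding rotation_set_def using sm
    by (intro CollectI exI[of _ z] exI[of _ n]) (simp add: eqf)
  then have "(1 / real m) *\<^sub>R v = vector [\<alpha>, \<beta>]" using rot by simp
  then have "((1 / real m) *\<^sub>R v) $ 1 = \<alpha>" by simp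
  then have "\<alpha> = real_of_int a / real m" unfolding v_def by simp
  then show False using rat_contra[OF ri] by blast
qed

end
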